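(* Suppose $H$ satisfies (B1) and (B2), and for $\alpha>0$ let $v^\alpha$ be the viscosity solution of (DP). There exists a constant $C>0$ such that for all $\alpha>0$, $$\|Dv^\alpha\|_{L^\infty(\mathbb{T}^d\times I)}+\|\Theta v^\alpha\|_{L^\infty(\mathbb{T}^d\times I)}\le C,$$ where $\Theta v(x,\xi):=\int_I k(\xi,\eta)(v(x,\xi)-v(x,\eta))\,d\eta$.
   Context: $I\subset\mathbb{R}$ finite interval, $|I|=1$; $k$ Borel measurable on $I\times I$ with $0<k_0\le k\le k_1$. $H\in C(\mathbb{T}^d\times\mathbb{R}^d)\otimes\mathcal{B}(I)$ with $H(\cdot,p,\cdot)$ bounded for each $p$. (DP): $\alpha v(x,\xi)+H(x,Dv(x,\xi),\xi)+\int_I k(\xi,\eta)(v(x,\xi)-v(x,\eta))d\eta=0$ in $\mathbb{T}^d\times I$ in the viscosity sense; it has a unique viscosity solution $v^\alpha\in C(\mathbb{T}^d)\otimes\mathcal{B}(I)$ with $|v^\alpha|\le M/\alpha$, $M:=\sup|H(\cdot,0,\cdot)|$. (B1): $C_1|p|^m-C_2\le H(x,p,\xi)$ for constants $C_1,C_2>0$, $m>1$. (B2): for each $R>0$ a modulus $\omega_R$ with $|H(x,p,\xi)-H(y,p,\xi)|\le\omega_R(|x-y|)$ for $|p|\le R$. *)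

theory Defs
  imports "HOL-Analysis.Analysis"
begin

text \<open>Functions on the torus T^d are represented as Z^d-periodic functions on real^'d.\<close>
definition periodic_Zd :: "(real^'d \<Rightarrow> 'b) \<Rightarrow> bool" where
  "periodic_Zd f \<longleftrightarrow> (\<forall>x z. (\<forall>i. z $ i \<in> \<int>) \<longrightarrow> f (x + z) = f x)"

definition C1_test :: "(real^'d \<Rightarrow> real) \<Rightarrow> (real^'d \<Rightarrow> real^'d) \<Rightarrow> bool" where
  "C1_test \<phi> D\<phi> \<longleftrightarrow> (\<forall>y. (\<phi> has_derivative (\<lambda>h. D\<phi> y \<bullet> h)) (at y)) \<and> continuous_on UNIV D\<phi>"

definition Theta :: "(real \<Rightarrow> real \<Rightarrow> real) \<Rightarrow> real set \<Rightarrow> (real^'d \<Rightarrow> real \<Rightarrow> real) \<Rightarrow> real^'d \<Rightarrow> real \<Rightarrow> real" where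
  "Theta k I v x \<xi> = (LINT \<eta>:I|lborel. k \<xi> \<eta> * (v x \<xi> - v x \<eta>))"

definition CB_class :: "real set \<Rightarrow> (real^'d \<Rightarrow> real \<Rightarrow> real) \<Rightarrow> bool" where
  "CB_class I v \<longleftrightarrow>
     (\<forall>\<xi>\<in>I. continuous_on UNIV (\<lambda>x. v x \<xi>) \<and> periodic_Zd (\<lambda>x. v x \<xi>)) \<and>
     (\<forall>x. set_borel_measurable lborel I (\<lambda>\<xi>. v x \<xi>)) \<and>
     (\<exists>B. \<forall>x. \<forall>\<xi>\<in>I. \<bar>v x \<xi>\<bar> \<le> B)"

definition DP_subsol :: "real set \<Rightarrow> (real \<Rightarrow> real \<Rightarrow> real) \<Rightarrow> (real^'d \<Rightarrow> real^'d \<Rightarrow> real \<Rightarrow> real)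
    \<Rightarrow> real \<Rightarrow> (real^'d \<Rightarrow> real \<Rightarrow> real) \<Rightarrow> bool" where
  "DP_subsol I k H \<alpha> v \<longleftrightarrow>
     (\<forall>\<xi>\<in>I. \<forall>\<phi> D\<phi> x0. C1_test \<phi> D\<phi> \<and>
        (\<exists>e>0. \<forall>y\<in>ball x0 e. v y \<xi> - \<phi> y \<le> v x0 \<xi> - \<phi> x0) \<longrightarrow>
        \<alpha> * v x0 \<xi> + H x0 (D\<phi> x0) \<xi> + Theta k I v x0 \<xi> \<le> 0)"

definition DP_supersol :: "real set \<Rightarrow> (real \<Rightarrow> real \<Rightarrow> real) \<Rightarrow> (real^'d \<Rightarrow> real^'d \<Rightarrow> real \<Rightarrow> real)
    \<Rightarrow> real \<Rightarrow> (real^'d \<Rightarrow> real \<Rightarrow> real) \<Rightarrow> bool" where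
  "DP_supersol I k H \<alpha> v \<longleftrightarrow>
     (\<forall>\<xi>\<in>I. \<forall>\<phi> D\<phi> x0. C1_test \<phi> D\<phi> \<and>
        (\<exists>e>0. \<forall>y\<in>ball x0 e. v y \<xi> - \<phi> y \<ge> v x0 \<xi> - \<phi> x0) \<longrightarrow>
        \<alpha> * v x0 \<xi> + H x0 (D\<phi> x0) \<xi> + Theta k I v x0 \<xi> \<ge> 0)"

definition DP_solution :: "real set \<Rightarrow> (real \<Rightarrow> real \<Rightarrow> real) \<Rightarrow> (real^'d \<Rightarrow> real^'d \<Rightarrow> real \<Rightarrow> real)
    \<Rightarrow> real \<Rightarrow> (real^'d \<Rightarrow> real \<Rightarrow> real) \<Rightarrow> bool" where
  "DP_solution I k H \<alpha> v \<longleftrightarrow> CB_class I v \<and> DP_subsol I k H \<alpha> v \<and> DP_supersol I k H \<alpha> v"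

end

theory Submission
  imports Defs "HOL-Analysis.Analysis"
begin

lemma bdd_integ:
  fixes f :: "real \<Rightarrow> real"
  assumes "I \<in> sets lborel" "emeasure lborel I < \<infinity>" "set_borel_measurable lborel I f" "\<forall>x\<in>I. \<bar>f x\<bar> \<le> B"
  shows "set_integrable lborel I f"
proof (rule set_integrable_bound[where f="\<lambda>_. B"])
  show "set_integrable lborel I (\<lambda>_. B)"
    unfolding set_integrable_def using assms(1,2)
    by (simp add: integrable_real_mult_indicator)
  show "set_borel_measurable lborel I f" by fact
  show "AE x in lborel. x \<in> I \<longrightarrow> norm (f x) \<le> norm B"
  proof (rule AE_I2, rule impI)
    fix x assume "x \<in> I"
    then have "\<bar>f x\<bar> \<le> B" using assms(4) by blast
    then show "norm (f x) \<le> norm B" using abs_ge_self[of B] by simp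
  qed
qed

lemma set_meas_mult:
  fixes f g :: "real \<Rightarrow> real"
  assumes "set_borel_measurable lborel I f" "set_borel_measurable lborel I g"
  shows "set_borel_measurable lborel I (\<lambda>x. f x * g x)"
proof -
  have "(\<lambda>x. indicator I x *\<^sub>R (f x * g x)) = (\<lambda>x. (indicator I x *\<^sub>R f x) * (indicator I x *\<^sub>R g x))"
    by (auto simp: indicator_def)
  then show ?thesis using assms unfolding set_borel_measurable_def by simp
qed

lemma set_meas_diff:
  fixes f g :: "real \<Rightarrow> real"
  assumes "set_borel_measurable lborel I f" "set_borel_measurable lborel I g"
  shows "set_borel_measurable lborel I (\<lambda>x. f x - g x)"
proof -
  have "(\<lambda>x. indicator I x *\<^sub>R (f x - g x)) = (\<lambda>x. (indicator I x *\<^sub>R f x) - (indicator I x *\<^sub>R g x))"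
    by (auto simp: indicator_def)
  then show ?thesis using assms unfolding set_borel_measurable_def by simp
qed

lemma set_meas_const:
  assumes "I \<in> sets lborel"
  shows "set_borel_measurable lborel I (\<lambda>x. c::real)"
  unfolding set_borel_measurable_def using assms by simp

lemma k_section:
  fixes k :: "real \<Rightarrow> real \<Rightarrow> real"
  assumes "set_borel_measurable lborel (I \<times> I) (\<lambda>(\<xi>, \<eta>). k \<xi> \<eta>)" "\<xi> \<in> I"
  shows "set_borel_measurable lborel I (k \<xi>)"
proof -
  have m: "(\<lambda>p. indicator (I \<times> I) p *\<^sub>R (case p of (a, b) \<Rightarrow> k a b)) \<in> borel_measurable lborel"
    using assms(1) unfolding set_borel_measurable_def .
  have c: "(\<lambda>\<eta>::real. (\<xi>, \<eta>)) \<in> measurable lborel lborel"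
    by (auto intro!: borel_measurable_continuous_onI continuous_intros simp: measurable_lborel2)
  have "(\<lambda>\<eta>. indicator (I \<times> I) (\<xi>, \<eta>) *\<^sub>R (case (\<xi>, \<eta>) of (a, b) \<Rightarrow> k a b)) \<in> borel_measurable lborel"
    using measurable_compose[OF c m] by simp
  moreover have "(\<lambda>\<eta>. indicator (I \<times> I) (\<xi>, \<eta>) *\<^sub>R (case (\<xi>, \<eta>) of (a, b) \<Rightarrow> k a b)) = (\<lambda>\<eta>. indicator I \<eta> *\<^sub>R k \<xi> \<eta>)"
    using assms(2) by (auto simp: indicator_def)
  ultimately show ?thesis unfolding set_borel_measurable_def by simp
qed

lemma cube_rep:
  fixes y :: "real^'d"
  shows "\<exists>z. (\<forall>i. z $ i \<in> \<int>) \<and> (\<forall>i. 0 \<le> (y - z) $ i \<and> (y - z) $ i \<le> 1)"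
proof -
  define z :: "real^'d" where "z = (\<chi> i. of_int \<lfloor>y $ i\<rfloor>)"
  have "\<forall>i. z $ i \<in> \<int>" by (simp add: z_def)
  moreover have "\<forall>i. 0 \<le> (y - z) $ i \<and> (y - z) $ i \<le> 1"
  proof
    fix i
    have a: "of_int \<lfloor>y $ i\<rfloor> \<le> y $ i" by (rule of_int_floor_le)
    have b: "y $ i < of_int \<lfloor>y $ i\<rfloor> + 1" by (rule real_of_int_floor_add_one_gt)
    have "(y - z) $ i = y $ i - of_int \<lfloor>y $ i\<rfloor>" by (simp add: z_def)
    then show "0 \<le> (y - z) $ i \<and> (y - z) $ i \<le> 1" using a b by linarith
  qed
  ultimately show ?thesis by blast
qed

lemma periodic_cube:
  assumes "periodic_Zd f"
  shows "\<exists>y'. (\<forall>i. 0 \<le> y' $ i \<and> y' $ i \<le> 1) \<and> f y' = f (y::real^'d)"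
proof -
  obtain z where z: "\<forall>i. z $ i \<in> \<int>" "\<forall>i. 0 \<le> (y - z) $ i \<and> (y - z) $ i \<le> 1"
    using cube_rep by blast
  have "f ((y - z) + z) = f (y - z)" using assms z(1) unfolding periodic_Zd_def by blast
  then show ?thesis using z(2) by (intro exI[of _ "y - z"]) auto
qed

lemma attain_max:
  fixes f :: "real^'d \<Rightarrow> real"
  assumes "continuous_on UNIV f" "periodic_Zd f"
  shows "\<exists>x0. (\<forall>i. 0 \<le> x0 $ i \<and> x0 $ i \<le> 1) \<and> (\<forall>x. f x \<le> f x0)"
proof -
  let ?C = "cbox (0::real^'d) 1"
  have "compact ?C" by simp
  moreover have "(0::real^'d) \<in> ?C" by (simp add: mem_box_cart)
  then have "?C \<noteq> {}" by blast
  moreover have "continuous_on ?C f" using assms(1) by (rule continuous_on_subset) auto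
  ultimately obtain x0 where x0: "x0 \<in> ?C" "\<forall>y\<in>?C. f y \<le> f x0"
    using continuous_attains_sup by blast
  have "f x \<le> f x0" for x
  proof -
    obtain y' where y': "\<forall>i. 0 \<le> y' $ i \<and> y' $ i \<le> 1" "f y' = f x"
      using periodic_cube[OF assms(2)] by blast
    from y'(1) have "y' \<in> ?C" by (simp add: mem_box_cart)
    then have "f y' \<le> f x0" using x0(2) by blast
    then show ?thesis using y'(2) by simp
  qed
  then show ?thesis using x0(1) by (auto simp: mem_box_cart)
qed

lemma attain_min:
  fixes f :: "real^'d \<Rightarrow> real"
  assumes "continuous_on UNIV f" "periodic_Zd f"
  shows "\<exists>x0. (\<forall>i. 0 \<le> x0 $ i \<and> x0 $ i \<le> 1) \<and> (\<forall>x. f x0 \<le> f x)"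
proof -
  have "continuous_on UNIV (\<lambda>x. - f x)" using assms(1) by (intro continuous_intros)
  moreover have "periodic_Zd (\<lambda>x. - f x)" using assms(2) unfolding periodic_Zd_def by simp
  ultimately show ?thesis using attain_max[of "\<lambda>x. - f x"] by auto
qed

lemma cube_dist:
  fixes x y :: "real^'d"
  assumes "\<forall>i. 0 \<le> x $ i \<and> x $ i \<le> 1" "\<forall>i. 0 \<le> y $ i \<and> y $ i \<le> 1"
  shows "norm (x - y) \<le> real CARD('d)"
proof -
  have "norm (x - y) \<le> (\<Sum>i\<in>UNIV. \<bar>(x - y) $ i\<bar>)" by (rule norm_le_l1_cart)
  also have "\<dots> \<le> (\<Sum>i\<in>(UNIV::'d set). 1)"
  proof (intro sum_mono)
    fix i show "\<bar>(x - y) $ i\<bar> \<le> 1" using assms(1)[rule_format, of i] assms(2)[rule_format, of i] by auto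
  qed
  finally show ?thesis by simp
qed

lemma C1_const: "C1_test (\<lambda>_. c) (\<lambda>_. 0)"
  unfolding C1_test_def by (auto intro!: derivative_eq_intros)

lemma aux_inner:
  fixes w h :: "real^'d" and L s :: real
  shows "L * (inverse s / 2 * (h \<bullet> w + w \<bullet> h)) = ((L / s) *\<^sub>R w) \<bullet> h"
proof -
  have "h \<bullet> w = w \<bullet> h" by (rule inner_commute)
  then have "L * (inverse s / 2 * (h \<bullet> w + w \<bullet> h)) = L * (inverse s * (w \<bullet> h))" by simp
  also have "\<dots> = ((L / s) *\<^sub>R w) \<bullet> h" by (simp add: divide_inverse)
  finally show ?thesis .
qed

lemma phi_deriv:
  fixes y :: "real^'d"
  assumes "0 < \<epsilon>"
  shows "C1_test (\<lambda>z. L * sqrt ((z - y) \<bullet> (z - y) + \<epsilon>^2))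
                 (\<lambda>z. (L / sqrt ((z - y) \<bullet> (z - y) + \<epsilon>^2)) *\<^sub>R (z - y))"
proof -
  have pos: "0 < (z - y) \<bullet> (z - y) + \<epsilon>^2" for z :: "real^'d"
    using assms by (simp add: add_nonneg_pos)
  have "((\<lambda>z. L * sqrt ((z - y) \<bullet> (z - y) + \<epsilon>^2)) has_derivative
          (\<lambda>h. ((L / sqrt ((z - y) \<bullet> (z - y) + \<epsilon>^2)) *\<^sub>R (z - y)) \<bullet> h)) (at z)" for z
  proof -
    have "((\<lambda>z. L * sqrt ((z - y) \<bullet> (z - y) + \<epsilon>^2)) has_derivative
          (\<lambda>h. L * (inverse (sqrt ((z - y) \<bullet> (z - y) + \<epsilon>^2)) / 2 * (h \<bullet> (z - y) + (z - y) \<bullet> h)))) (at z)"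
      using pos[of z] by (auto intro!: derivative_eq_intros)
    moreover have "(\<lambda>h. L * (inverse (sqrt ((z - y) \<bullet> (z - y) + \<epsilon>^2)) / 2 * (h \<bullet> (z - y) + (z - y) \<bullet> h)))
       = (\<lambda>h. ((L / sqrt ((z - y) \<bullet> (z - y) + \<epsilon>^2)) *\<^sub>R (z - y)) \<bullet> h)"
      by (rule ext) (rule aux_inner)
    ultimately show ?thesis by simp
  qed
  moreover have "continuous_on UNIV (\<lambda>z. (L / sqrt ((z - y) \<bullet> (z - y) + \<epsilon>^2)) *\<^sub>R (z - y))"
    using pos by (auto intro!: continuous_intros simp: less_imp_neq[symmetric])
  ultimately show ?thesis unfolding C1_test_def by blast
qed

lemma sq_arith:
  fixes L R n s e :: real
  assumes "L = R + 1" "0 \<le> R" "0 \<le> n" "0 < e" "s = sqrt (n^2 + e^2)" "L * n \<le> R * s"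
  shows "n \<le> R * e"
proof -
  have s2: "s^2 = n^2 + e^2" using assms(5) by simp
  have "(L * n)^2 \<le> (R * s)^2"
    by (rule power_mono[OF assms(6)]) (use assms(1,2,3) in simp)
  then have h1: "L^2 * n^2 \<le> R^2 * (n^2 + e^2)" by (simp only: power_mult_distrib s2)
  have h2: "L^2 * n^2 = R^2 * n^2 + (2 * R + 1) * n^2" unfolding assms(1) by (simp add: power2_eq_square algebra_simps)
  have h3: "R^2 * (n^2 + e^2) = R^2 * n^2 + R^2 * e^2" by (rule distrib_left)
  have h4: "1 * n^2 \<le> (2 * R + 1) * n^2" using assms(2) by (intro mult_right_mono) auto
  have h5: "(R * e)^2 = R^2 * e^2" by (rule power_mult_distrib)
  have "n^2 \<le> (R * e)^2" using h1 h2 h3 h4 h5 by linarith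
  then show ?thesis by (rule power2_le_imp_le) (use assms(2,4) in simp)
qed

lemma lip_from_sub:
  fixes u :: "real^'d \<Rightarrow> real"
  assumes cont: "continuous_on UNIV u" and bdd: "\<And>x. \<bar>u x\<bar> \<le> B"
    and sub: "\<And>\<phi> D\<phi> x0. C1_test \<phi> D\<phi> \<Longrightarrow> (\<And>y. u y - \<phi> y \<le> u x0 - \<phi> x0) \<Longrightarrow> norm (D\<phi> x0) \<le> R"
    and R: "0 \<le> R"
  shows "(R+1)-lipschitz_on UNIV u"
proof -
  define L where "L = R + 1"
  have L: "0 < L" "1 \<le> L" using R by (auto simp: L_def)
  have key: "u x \<le> u y + L * dist x y" for x y
  proof (rule field_le_epsilon)
    fix \<delta> :: real assume \<delta>: "0 < \<delta>"
    from cont have "continuous (at y) u" by (simp add: continuous_on_eq_continuous_at)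
    then obtain \<rho> where \<rho>: "\<rho> > 0" "\<And>z. dist z y < \<rho> \<Longrightarrow> dist (u z) (u y) < \<delta>"
      unfolding continuous_at_eps_delta using \<delta> by blast
    define \<epsilon> where "\<epsilon> = \<rho> / (R + 2)"
    have R2: "0 < R + 2" using R by simp
    have \<epsilon>1: "0 < \<epsilon>" unfolding \<epsilon>_def using \<rho>(1) R2 by simp
    have "R * \<epsilon> \<le> (R + 2) * \<epsilon> - 2 * \<epsilon>" by (simp add: algebra_simps)
    also have "(R + 2) * \<epsilon> = \<rho>" unfolding \<epsilon>_def using R2 by simp
    finally have "R * \<epsilon> < \<rho>" using \<epsilon>1 by linarith
    note \<epsilon> = \<epsilon>1 this
    define q where "q z = (z - y) \<bullet> (z - y) + \<epsilon>^2" for z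
    define \<phi> where "\<phi> z = L * sqrt (q z)" for z
    define D\<phi> where "D\<phi> z = (L / sqrt (q z)) *\<^sub>R (z - y)" for z
    define g where "g z = u z - \<phi> z" for z
    have qn: "q z = (norm (z - y))^2 + \<epsilon>^2" for z
      by (simp add: q_def power2_norm_eq_inner)
    have sq_ge_n: "norm (z - y) \<le> sqrt (q z)" for z
      unfolding qn using real_sqrt_ge_abs1[of "norm (z - y)" \<epsilon>] by simp
    have sq_ge_e: "\<epsilon> \<le> sqrt (q z)" for z
      unfolding qn using real_sqrt_ge_abs2[of "norm (z - y)" \<epsilon>] \<epsilon>(1) by simp
    have sq_le: "sqrt (q z) \<le> norm (z - y) + \<epsilon>" for z
    proof -
      have "q z \<le> (norm (z - y) + \<epsilon>)^2" unfolding qn using \<epsilon>(1)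
        by (simp add: power2_sum)
      then have "sqrt (q z) \<le> sqrt ((norm (z - y) + \<epsilon>)^2)" by (rule real_sqrt_le_mono)
      also have "\<dots> = norm (z - y) + \<epsilon>" using \<epsilon>(1) by simp
      finally show ?thesis .
    qed
    have sq_pos: "0 < sqrt (q z)" for z using sq_ge_e[of z] \<epsilon>(1) by linarith
    have e1: "\<phi> = (\<lambda>z. L * sqrt ((z - y) \<bullet> (z - y) + \<epsilon>^2))"
      by (rule ext) (simp only: \<phi>_def q_def)
    have e2: "D\<phi> = (\<lambda>z. (L / sqrt ((z - y) \<bullet> (z - y) + \<epsilon>^2)) *\<^sub>R (z - y))"
      by (rule ext) (simp only: D\<phi>_def q_def)
    have C1: "C1_test \<phi> D\<phi>"
      unfolding e1 e2 by (rule phi_deriv[OF \<epsilon>(1)])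
    have phiy: "\<phi> y = L * \<epsilon>" using \<epsilon>(1) by (simp add: \<phi>_def q_def)
    define r where "r = (2 * B + L * \<epsilon>) / L + 1"
    have B0: "0 \<le> B" using bdd[of y] by linarith
    have cpt: "compact (cball y r)" by simp
    have "0 \<le> (2 * B + L * \<epsilon>) / L" using B0 L \<epsilon> by simp
    then have "0 \<le> r" unfolding r_def by linarith
    then have yin: "y \<in> cball y r" by simp
    then have ne: "cball y r \<noteq> {}" by blast
    have "continuous_on UNIV g"
    proof -
      have c1: "continuous_on UNIV (\<lambda>z::real^'d. (z - y) \<bullet> (z - y) + \<epsilon>^2)"
        by (intro continuous_on_add continuous_on_inner continuous_on_diff continuous_on_id continuous_on_const)
      have c2: "continuous_on UNIV (\<lambda>z::real^'d. L * sqrt ((z - y) \<bullet> (z - y) + \<epsilon>^2))"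
        by (intro continuous_on_mult continuous_on_const continuous_on_real_sqrt c1)
      have "continuous_on UNIV (\<lambda>z. u z - L * sqrt ((z - y) \<bullet> (z - y) + \<epsilon>^2))"
        by (rule continuous_on_diff[OF cont c2])
      moreover have "g = (\<lambda>z. u z - L * sqrt ((z - y) \<bullet> (z - y) + \<epsilon>^2))"
        by (rule ext) (simp only: g_def e1)
      ultimately show ?thesis by simp
    qed
    then have cc: "continuous_on (cball y r) g" by (rule continuous_on_subset) simp
    from continuous_attains_sup[OF cpt ne cc] obtain z0
      where z0a: "z0 \<in> cball y r" and z0b: "\<forall>z\<in>cball y r. g z \<le> g z0" by blast
    have z0: "z0 \<in> cball y r" "\<And>z. z \<in> cball y r \<Longrightarrow> g z \<le> g z0"
      using z0a z0b by auto
    have gz0: "g z \<le> g z0" for z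
    proof (cases "z \<in> cball y r")
      case True then show ?thesis using z0 by blast
    next
      case False
      then have "r < dist y z" by (simp add: not_le)
      moreover have "dist y z = dist z y" by (rule dist_commute)
      moreover have "dist z y = norm (z - y)" by (rule dist_norm)
      ultimately have nz: "r < norm (z - y)" by linarith
      have r1: "L * r = L * ((2 * B + L * \<epsilon>) / L) + L" by (simp add: r_def distrib_left)
      have r2: "L * ((2 * B + L * \<epsilon>) / L) = 2 * B + L * \<epsilon>" using L by simp
      have r3: "L * r < L * norm (z - y)" by (rule mult_strict_left_mono[OF nz L(1)])
      have r4: "L * norm (z - y) \<le> L * sqrt (q z)" by (rule mult_left_mono[OF sq_ge_n]) (use L in simp)
      have r5: "\<phi> z = L * sqrt (q z)" by (rule \<phi>_def)
      have "g z < g y" unfolding g_def using bdd[of z] bdd[of y] phiy r1 r2 r3 r4 r5 L by linarith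
      also have "g y \<le> g z0" using z0(2)[OF yin] by blast
      finally show ?thesis by simp
    qed
    have gz0': "u z - \<phi> z \<le> u z0 - \<phi> z0" for z using gz0[of z] unfolding g_def .
    have nD: "norm (D\<phi> z0) \<le> R" by (rule sub[OF C1 gz0'])
    have na: "norm (D\<phi> z0) = \<bar>L / sqrt (q z0)\<bar> * norm (z0 - y)"
      unfolding D\<phi>_def by (rule norm_scaleR)
    have nb: "\<bar>L / sqrt (q z0)\<bar> = L / sqrt (q z0)" using L sq_pos[of z0] by simp
    have nD2: "norm (D\<phi> z0) = L / sqrt (q z0) * norm (z0 - y)" using na unfolding nb .
    have "L / sqrt (q z0) * norm (z0 - y) * sqrt (q z0) \<le> R * sqrt (q z0)"
      using nD nD2 sq_pos[of z0] by (intro mult_right_mono) auto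
    moreover have "L / sqrt (q z0) * norm (z0 - y) * sqrt (q z0) = L * norm (z0 - y)"
      using sq_pos[of z0] by simp
    ultimately have Ln: "L * norm (z0 - y) \<le> R * sqrt (q z0)" by simp
    have sqe: "sqrt (q z0) = sqrt ((norm (z0 - y))^2 + \<epsilon>^2)" by (simp only: qn)
    have "norm (z0 - y) \<le> R * \<epsilon>" by (rule sq_arith[OF L_def R norm_ge_zero \<epsilon>(1) sqe Ln])
    then have "dist z0 y < \<rho>" using \<epsilon> by (simp add: dist_norm)
    then have "dist (u z0) (u y) < \<delta>" by (rule \<rho>(2))
    then have uz0: "u z0 < u y + \<delta>" unfolding dist_real_def by arith
    have gx: "u x - \<phi> x \<le> u z0 - \<phi> z0" by (rule gz0')
    have p1: "L * sqrt (q x) \<le> L * (norm (x - y) + \<epsilon>)" by (rule mult_left_mono[OF sq_le]) (use L in simp)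
    have p2: "L * \<epsilon> \<le> L * sqrt (q z0)" by (rule mult_left_mono[OF sq_ge_e]) (use L in simp)
    have "u x \<le> u z0 + L * norm (x - y)"
      using gx p1 p2 \<phi>_def[of x] \<phi>_def[of z0] distrib_left[of L "norm (x - y)" \<epsilon>] by linarith
    then show "u x \<le> u y + L * dist x y + \<delta>" using uz0 by (simp add: dist_norm)
  qed
  show ?thesis unfolding L_def[symmetric]
  proof (rule lipschitz_onI)
    fix x y :: "real^'d"
    show "dist (u x) (u y) \<le> L * dist x y"
      using key[of x y] key[of y x] by (simp add: dist_real_def dist_commute)
  qed (use L in auto)
qed

lemma sublin_bound:
  fixes Y A B m :: real
  assumes "1 < m" "0 \<le> A" "0 \<le> B" "0 \<le> Y" "Y \<le> A + B * Y powr (1/m)"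
  shows "Y \<le> max 1 ((A + B) powr (m / (m - 1)))"
proof (cases "Y \<le> 1")
  case True then show ?thesis by simp
next
  case False
  then have Y1: "1 < Y" by simp
  have m0: "0 \<le> 1/m" using assms(1) by simp
  have p1: "1 \<le> Y powr (1/m)" by (rule ge_one_powr_ge_zero) (use Y1 m0 in auto)
  have "A * 1 \<le> A * Y powr (1/m)" by (rule mult_left_mono[OF p1 assms(2)])
  moreover have "(A + B) * Y powr (1/m) = A * Y powr (1/m) + B * Y powr (1/m)" by (rule distrib_right)
  ultimately have "Y \<le> (A + B) * Y powr (1/m)" using assms(5) by linarith
  moreover have "Y powr (1/m) * Y powr (1 - 1/m) = Y powr (1/m + (1 - 1/m))" by (rule powr_add[symmetric])
  then have "Y = Y powr (1/m) * Y powr (1 - 1/m)" using Y1 by simp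
  ultimately have "Y powr (1/m) * Y powr (1 - 1/m) \<le> (A + B) * Y powr (1/m)" by simp
  then have "Y powr (1/m) * Y powr (1 - 1/m) \<le> Y powr (1/m) * (A + B)" by (simp add: mult.commute)
  then have h: "Y powr (1 - 1/m) \<le> A + B" using p1 by (subst (asm) mult_le_cancel_left_pos) auto
  have e: "(1 - 1/m) * (m / (m - 1)) = 1" using assms(1) by (simp add: field_simps)
  have "(Y powr (1 - 1/m)) powr (m / (m - 1)) = Y powr ((1 - 1/m) * (m / (m - 1)))"
    by (rule powr_powr)
  then have "Y = (Y powr (1 - 1/m)) powr (m / (m - 1))"
    using Y1 by (simp only: e) simp
  also have "\<dots> \<le> (A + B) powr (m / (m - 1))"
    using h assms(1) by (intro powr_mono2) auto
  finally show ?thesis by simp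
qed

lemma I_facts:
  fixes I :: "real set"
  assumes "measure lborel I = (1::real)"
  shows "I \<in> sets lborel" "emeasure lborel I < \<infinity>" "I \<noteq> {}"
proof -
  show s: "I \<in> sets lborel"
  proof (rule ccontr)
    assume "I \<notin> sets lborel"
    then have "measure lborel I = 0" by (rule measure_notin_sets)
    then show False using assms by simp
  qed
  show "emeasure lborel I < \<infinity>"
  proof (rule ccontr)
    assume "\<not> emeasure lborel I < \<infinity>"
    then have "emeasure lborel I = \<infinity>" by (simp add: less_top[symmetric])
    then have "measure lborel I = 0" by (simp add: measure_def)
    then show False using assms by simp
  qed
  show "I \<noteq> {}"
  proof
    assume "I = {}"
    then show False using assms by simp
  qed
qed

lemma int_affine:
  fixes g :: "real \<Rightarrow> real" and a c :: real and I :: "real set"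
  assumes "I \<in> sets lborel" "measure lborel I = (1::real)" "emeasure lborel I < \<infinity>"
    and "set_integrable lborel I g"
  shows "(LINT \<zeta>:I|lborel. a * g \<zeta> + c) = a * (LINT \<zeta>:I|lborel. g \<zeta>) + c"
proof -
  have ci: "set_integrable lborel I (\<lambda>_. c)"
    unfolding set_integrable_def using assms(1,3) by (simp add: integrable_real_mult_indicator)
  have "(LINT \<zeta>:I|lborel. a * g \<zeta> + c) = (LINT \<zeta>:I|lborel. a * g \<zeta>) + (LINT \<zeta>:I|lborel. c)"
  proof -
    have e: "(\<lambda>x. indicator I x *\<^sub>R (a * g x)) = (\<lambda>x. a * (indicator I x *\<^sub>R g x))"
      by (simp add: fun_eq_iff)
    have "integrable lborel (\<lambda>x. a * (indicator I x *\<^sub>R g x))"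
      using assms(4) unfolding set_integrable_def by (rule integrable_mult_right)
    then have ai: "set_integrable lborel I (\<lambda>\<zeta>. a * g \<zeta>)"
      unfolding set_integrable_def e .
    show ?thesis by (rule set_integral_add(2)[OF ai ci])
  qed
  also have "(LINT \<zeta>:I|lborel. c) = c" using assms(1,2,3) by (simp add: set_integral_const)
  finally show ?thesis by simp
qed

lemma int_aff_integ:
  fixes g :: "real \<Rightarrow> real" and a c :: real and I :: "real set"
  assumes "I \<in> sets lborel" "emeasure lborel I < \<infinity>" "set_integrable lborel I g"
  shows "set_integrable lborel I (\<lambda>\<zeta>. a * g \<zeta> + c)"
proof -
  have ci: "set_integrable lborel I (\<lambda>_. c)"
    unfolding set_integrable_def using assms(1,2) by (simp add: integrable_real_mult_indicator)
  have e: "(\<lambda>x. indicator I x *\<^sub>R (a * g x)) = (\<lambda>x. a * (indicator I x *\<^sub>R g x))"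
    by (simp add: fun_eq_iff)
  have "integrable lborel (\<lambda>x. a * (indicator I x *\<^sub>R g x))"
    using assms(3) unfolding set_integrable_def by (rule integrable_mult_right)
  then have ai: "set_integrable lborel I (\<lambda>\<zeta>. a * g \<zeta>)"
    unfolding set_integrable_def e .
  show ?thesis by (rule set_integral_add(1)[OF ai ci])
qed

lemma prod_lb:
  fixes k k1 lo d :: real
  assumes "0 \<le> k" "k \<le> k1" "lo \<le> d" "lo \<le> 0"
  shows "k1 * lo \<le> k * d"
proof -
  have "k * lo \<le> k * d" using assms by (intro mult_left_mono) auto
  moreover have "k1 * lo \<le> k * lo" using assms by (intro mult_right_mono_neg) auto
  ultimately show ?thesis by linarith
qed

lemma prod_ub:
  fixes k k1 hi d :: real
  assumes "0 \<le> k" "k \<le> k1" "d \<le> hi" "0 \<le> hi"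
  shows "k * d \<le> k1 * hi"
proof -
  have "k * d \<le> k * hi" using assms by (intro mult_left_mono) auto
  moreover have "k * hi \<le> k1 * hi" using assms by (intro mult_right_mono) auto
  ultimately show ?thesis by linarith
qed

lemma ar1:
  fixes k0 k k1 g e d :: real
  assumes "k0 \<le> k" "k \<le> k1" "0 \<le> k0" "0 \<le> g" "0 \<le> e" "e \<le> 1" "d = g - e"
  shows "k0 * g + - k1 \<le> k * d"
proof -
  have "k0 * g \<le> k * g" using assms by (intro mult_right_mono) auto
  moreover have "k * e \<le> k1 * 1" using assms by (intro mult_mono) auto
  moreover have "k * d = k * g - k * e" using assms(7) by (simp add: right_diff_distrib)
  ultimately show ?thesis by linarith
qed

lemma ar2:
  fixes k0 k k1 w d h :: real
  assumes "k0 \<le> k" "k \<le> k1" "0 \<le> k0" "0 \<le> w" "d \<le> h - w" "0 \<le> h"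
  shows "k * d \<le> k1 * h - k0 * w"
proof -
  have "k * d \<le> k * (h - w)" using assms by (intro mult_left_mono) auto
  moreover have "k * (h - w) = k * h - k * w" by (simp add: right_diff_distrib)
  moreover have "k * h \<le> k1 * h" using assms by (intro mult_right_mono) auto
  moreover have "k0 * w \<le> k * w" using assms by (intro mult_right_mono) auto
  ultimately show ?thesis by linarith
qed

theorem mainTheorem7:
  fixes H :: "real^'d \<Rightarrow> real^'d \<Rightarrow> real \<Rightarrow> real"
    and k :: "real \<Rightarrow> real \<Rightarrow> real"
    and I :: "real set"
    and k0 k1 C1 C2 m :: real
  assumes I_interval: "is_interval I" and I_bounded: "bounded I"
    and I_length: "measure lborel I = 1"
    and k_meas: "set_borel_measurable lborel (I \<times> I) (\<lambda>(\<xi>, \<eta>). k \<xi> \<eta>)"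
    and k0_pos: "0 < k0"
    and k_bounds: "\<And>\<xi> \<eta>. \<xi> \<in> I \<Longrightarrow> \<eta> \<in> I \<Longrightarrow> k0 \<le> k \<xi> \<eta> \<and> k \<xi> \<eta> \<le> k1"
    and H_cont: "\<And>\<xi>. \<xi> \<in> I \<Longrightarrow> continuous_on UNIV (\<lambda>(x, p). H x p \<xi>)"
    and H_per: "\<And>\<xi> p. \<xi> \<in> I \<Longrightarrow> periodic_Zd (\<lambda>x. H x p \<xi>)"
    and H_meas: "\<And>x p. set_borel_measurable lborel I (\<lambda>\<xi>. H x p \<xi>)"
    and H_bdd: "\<And>p. \<exists>B. \<forall>x. \<forall>\<xi>\<in>I. \<bar>H x p \<xi>\<bar> \<le> B"
    and B1: "0 < C1" "0 < C2" "1 < m"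
      "\<And>x p \<xi>. \<xi> \<in> I \<Longrightarrow> C1 * norm p powr m - C2 \<le> H x p \<xi>"
    and B2: "\<And>R. 0 < R \<Longrightarrow> \<exists>\<omega>::real \<Rightarrow> real. (\<omega> \<longlongrightarrow> 0) (at_right 0) \<and>
              (\<forall>x y p \<xi>. \<xi> \<in> I \<and> norm p \<le> R \<longrightarrow> \<bar>H x p \<xi> - H y p \<xi>\<bar> \<le> \<omega> (dist x y))"
  shows "\<exists>C>0. \<forall>\<alpha>>0. \<forall>v. DP_solution I k H \<alpha> v \<longrightarrow>
           (AE \<xi> in lborel. \<xi> \<in> I \<longrightarrow>
              C-lipschitz_on UNIV (\<lambda>x. v x \<xi>) \<and> (\<forall>x. \<bar>Theta k I v x \<xi>\<bar> \<le> C))"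
proof -
  have Isets: "I \<in> sets lborel" and Ifin: "emeasure lborel I < \<infinity>" and Ine: "I \<noteq> {}"
    using I_facts[OF I_length] by auto
  obtain \<xi>0 where \<xi>0: "\<xi>0 \<in> I" using Ine by blast
  obtain M0 where M0: "\<forall>x. \<forall>\<xi>\<in>I. \<bar>H x 0 \<xi>\<bar> \<le> M0" using H_bdd[of 0] by blast
  have Hb: "- M0 \<le> H x 0 \<xi> \<and> H x 0 \<xi> \<le> M0" if "\<xi> \<in> I" for x \<xi>
  proof -
    have "\<bar>H x 0 \<xi>\<bar> \<le> M0" using M0 that by blast
    then show ?thesis by arith
  qed
  have M0pos: "0 \<le> M0" using Hb[OF \<xi>0, of 0] by linarith
  have k01: "k0 \<le> k1" using k_bounds[OF \<xi>0 \<xi>0] by linarith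
  have k1pos: "0 < k1" using k0_pos k01 by linarith
  have kb: "0 \<le> k \<xi> \<zeta>" "k0 \<le> k \<xi> \<zeta>" "k \<xi> \<zeta> \<le> k1" if "\<xi> \<in> I" "\<zeta> \<in> I" for \<xi> \<zeta>
    using k_bounds[OF that] k0_pos by auto
  define D where "D = real CARD('d)"
  have D0: "0 \<le> D" by (simp add: D_def)
  define B0 where "B0 = (2 * M0 + k1) / k0"
  define A0 where "A0 = (2 * M0 + k1 * B0) / k0"
  define A1 where "A1 = k1 * D / k0"
  define Ya where "Ya = (M0 + C2) / C1 + k1 * (A0 + A1) / C1"
  define Yb where "Yb = k1 * A1 / C1"
  define Ymax where "Ymax = max 1 ((Ya + Yb) powr (m / (m - 1)))"
  define Rmax where "Rmax = Ymax powr (1 / m)"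
  define Tmax where "Tmax = A0 + A1 * (Rmax + 1)"
  define C where "C = max (Rmax + 1) (k1 * Tmax) + 1"
  have B00: "0 \<le> B0" using M0pos k1pos k0_pos by (simp add: B0_def)
  have A00: "0 \<le> A0" using M0pos k1pos k0_pos B00 by (simp add: A0_def)
  have A10: "0 \<le> A1" using k1pos k0_pos D0 by (simp add: A1_def)
  have Ya0: "0 \<le> Ya" using M0pos B1(1,2) k1pos A00 A10 by (simp add: Ya_def)
  have Yb0: "0 \<le> Yb" using k1pos A10 B1(1) by (simp add: Yb_def)
  have Rmax0: "0 \<le> Rmax" by (simp add: Rmax_def)
  have Cge1: "Rmax + 1 \<le> max (Rmax + 1) (k1 * Tmax)" by simp
  have Cge2: "k1 * Tmax \<le> max (Rmax + 1) (k1 * Tmax)" by simp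
  have Cpos: "0 < C" unfolding C_def using Cge1 Rmax0 by linarith
  have main: "\<forall>\<xi>\<in>I. C-lipschitz_on UNIV (\<lambda>x. v x \<xi>) \<and> (\<forall>x. \<bar>Theta k I v x \<xi>\<bar> \<le> C)"
    if \<alpha>: "0 < \<alpha>" and sol: "DP_solution I k H \<alpha> v" for \<alpha> v
  proof -
    have cont: "\<And>\<xi>. \<xi> \<in> I \<Longrightarrow> continuous_on UNIV (\<lambda>x. v x \<xi>)"
      and per: "\<And>\<xi>. \<xi> \<in> I \<Longrightarrow> periodic_Zd (\<lambda>x. v x \<xi>)"
      and measv: "\<And>x. set_borel_measurable lborel I (\<lambda>\<xi>. v x \<xi>)"
      using sol unfolding DP_solution_def CB_class_def by auto
    obtain Bv where Bv: "\<And>x \<xi>. \<xi> \<in> I \<Longrightarrow> \<bar>v x \<xi>\<bar> \<le> Bv"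
      using sol unfolding DP_solution_def CB_class_def by blast
    have subs: "\<alpha> * v x0 \<xi> + H x0 (D\<phi> x0) \<xi> + Theta k I v x0 \<xi> \<le> 0"
      if "\<xi> \<in> I" "C1_test \<phi> D\<phi>" "\<And>y. v y \<xi> - \<phi> y \<le> v x0 \<xi> - \<phi> x0" for \<xi> \<phi> D\<phi> x0
    proof -
      have "DP_subsol I k H \<alpha> v" using sol by (simp add: DP_solution_def)
      moreover have "\<exists>e>0. \<forall>y\<in>ball x0 e. v y \<xi> - \<phi> y \<le> v x0 \<xi> - \<phi> x0"
        using that(3) by (intro exI[of _ 1]) auto
      ultimately show ?thesis using that(1,2) unfolding DP_subsol_def by blast
    qed
    have sups: "\<alpha> * v x0 \<xi> + H x0 (D\<phi> x0) \<xi> + Theta k I v x0 \<xi> \<ge> 0"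
      if "\<xi> \<in> I" "C1_test \<phi> D\<phi>" "\<And>y. v y \<xi> - \<phi> y \<ge> v x0 \<xi> - \<phi> x0" for \<xi> \<phi> D\<phi> x0
    proof -
      have "DP_supersol I k H \<alpha> v" using sol by (simp add: DP_solution_def)
      moreover have "\<exists>e>0. \<forall>y\<in>ball x0 e. v y \<xi> - \<phi> y \<ge> v x0 \<xi> - \<phi> x0"
        using that(3) by (intro exI[of _ 1]) auto
      ultimately show ?thesis using that(1,2) unfolding DP_supersol_def by blast
    qed
    have subc: "\<alpha> * v x0 \<xi> + H x0 0 \<xi> + Theta k I v x0 \<xi> \<le> 0"
      if "\<xi> \<in> I" "\<And>y. v y \<xi> \<le> v x0 \<xi>" for \<xi> x0
    proof -
      have "\<alpha> * v x0 \<xi> + H x0 ((\<lambda>_. 0) x0) \<xi> + Theta k I v x0 \<xi> \<le> 0"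
        by (rule subs[OF that(1) C1_const]) (simp add: that(2))
      then show ?thesis by simp
    qed
    have supc: "\<alpha> * v x0 \<xi> + H x0 0 \<xi> + Theta k I v x0 \<xi> \<ge> 0"
      if "\<xi> \<in> I" "\<And>y. v x0 \<xi> \<le> v y \<xi>" for \<xi> x0
    proof -
      have "\<alpha> * v x0 \<xi> + H x0 ((\<lambda>_. 0) x0) \<xi> + Theta k I v x0 \<xi> \<ge> 0"
        by (rule sups[OF that(1) C1_const]) (simp add: that(2))
      then show ?thesis by simp
    qed
    have mk: "set_borel_measurable lborel I (k \<xi>)" if "\<xi> \<in> I" for \<xi>
      by (rule k_section[OF k_meas that])
    have mvd: "set_borel_measurable lborel I (\<lambda>\<zeta>. c - v x \<zeta>)" for x c
      by (rule set_meas_diff[OF set_meas_const[OF Isets] measv])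
    have integ_v: "set_integrable lborel I (\<lambda>\<zeta>. c - v x \<zeta>)" for x c
    proof (rule bdd_integ[OF Isets Ifin mvd])
      show "\<forall>\<zeta>\<in>I. \<bar>c - v x \<zeta>\<bar> \<le> \<bar>c\<bar> + Bv"
      proof
        fix \<zeta> assume "\<zeta> \<in> I"
        then have "\<bar>v x \<zeta>\<bar> \<le> Bv" by (rule Bv)
        then show "\<bar>c - v x \<zeta>\<bar> \<le> \<bar>c\<bar> + Bv" by arith
      qed
    qed
    have integ_k: "set_integrable lborel I (\<lambda>\<zeta>. k \<xi> \<zeta> * (c - v x \<zeta>))" if "\<xi> \<in> I" for \<xi> x c
    proof (rule bdd_integ[OF Isets Ifin set_meas_mult[OF mk[OF that] mvd]])
      show "\<forall>\<zeta>\<in>I. \<bar>k \<xi> \<zeta> * (c - v x \<zeta>)\<bar> \<le> k1 * (\<bar>c\<bar> + Bv)"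
      proof
        fix \<zeta> assume \<zeta>: "\<zeta> \<in> I"
        have "\<bar>k \<xi> \<zeta>\<bar> \<le> k1" using kb[OF that \<zeta>] by arith
        moreover have "\<bar>c - v x \<zeta>\<bar> \<le> \<bar>c\<bar> + Bv" using Bv[OF \<zeta>, of x] by arith
        ultimately show "\<bar>k \<xi> \<zeta> * (c - v x \<zeta>)\<bar> \<le> k1 * (\<bar>c\<bar> + Bv)"
          unfolding abs_mult by (rule mult_mono) (use k1pos in auto)
      qed
    qed
    have intbd: "a * (LINT \<zeta>:I|lborel. c' - v x' \<zeta>) + b \<le> (LINT \<zeta>:I|lborel. k \<xi> \<zeta> * (c - v x \<zeta>))"
      if "\<xi> \<in> I" "\<And>\<zeta>. \<zeta> \<in> I \<Longrightarrow> a * (c' - v x' \<zeta>) + b \<le> k \<xi> \<zeta> * (c - v x \<zeta>)"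
      for \<xi> x c x' c' a b
    proof -
      have "(LINT \<zeta>:I|lborel. a * (c' - v x' \<zeta>) + b) \<le> (LINT \<zeta>:I|lborel. k \<xi> \<zeta> * (c - v x \<zeta>))"
        by (rule set_integral_mono[OF int_aff_integ[OF Isets Ifin integ_v] integ_k[OF that(1)] that(2)])
      moreover have "(LINT \<zeta>:I|lborel. a * (c' - v x' \<zeta>) + b) = a * (LINT \<zeta>:I|lborel. c' - v x' \<zeta>) + b"
        by (rule int_affine[OF Isets I_length Ifin integ_v])
      ultimately show ?thesis by simp
    qed
    have intbd2: "(LINT \<zeta>:I|lborel. k \<xi> \<zeta> * (c - v x \<zeta>)) \<le> a * (LINT \<zeta>:I|lborel. c' - v x' \<zeta>) + b"
      if "\<xi> \<in> I" "\<And>\<zeta>. \<zeta> \<in> I \<Longrightarrow> k \<xi> \<zeta> * (c - v x \<zeta>) \<le> a * (c' - v x' \<zeta>) + b"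
      for \<xi> x c x' c' a b
    proof -
      have "(LINT \<zeta>:I|lborel. k \<xi> \<zeta> * (c - v x \<zeta>)) \<le> (LINT \<zeta>:I|lborel. a * (c' - v x' \<zeta>) + b)"
        by (rule set_integral_mono[OF integ_k[OF that(1)] int_aff_integ[OF Isets Ifin integ_v] that(2)])
      moreover have "(LINT \<zeta>:I|lborel. a * (c' - v x' \<zeta>) + b) = a * (LINT \<zeta>:I|lborel. c' - v x' \<zeta>) + b"
        by (rule int_affine[OF Isets I_length Ifin integ_v])
      ultimately show ?thesis by simp
    qed
    have Th: "Theta k I v x \<xi> = (LINT \<zeta>:I|lborel. k \<xi> \<zeta> * (v x \<xi> - v x \<zeta>))" for x \<xi>
      by (simp add: Theta_def)
    define V where "V = {v x \<xi> | x \<xi>. \<xi> \<in> I}"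
    have inV: "v x \<xi> \<in> V" if "\<xi> \<in> I" for x \<xi> using that by (auto simp: V_def)
    have Vne: "V \<noteq> {}" using inV[OF \<xi>0] by blast
    have bddA: "bdd_above V"
    proof (rule bdd_aboveI[of _ Bv])
      fix y assume "y \<in> V"
      then obtain x \<xi> where "y = v x \<xi>" "\<xi> \<in> I" by (auto simp: V_def)
      then show "y \<le> Bv" using Bv[of \<xi> x] by arith
    qed
    have bddB: "bdd_below V"
    proof (rule bdd_belowI[of _ "- Bv"])
      fix y assume "y \<in> V"
      then obtain x \<xi> where "y = v x \<xi>" "\<xi> \<in> I" by (auto simp: V_def)
      then show "- Bv \<le> y" using Bv[of \<xi> x] by arith
    qed
    define S where "S = Sup V"
    define s0 where "s0 = Inf V"
    have leS: "v x \<xi> \<le> S" if "\<xi> \<in> I" for x \<xi>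
      unfolding S_def by (rule cSup_upper[OF inV[OF that] bddA])
    have ges: "s0 \<le> v x \<xi>" if "\<xi> \<in> I" for x \<xi>
      unfolding s0_def by (rule cInf_lower[OF inV[OF that] bddB])
    have apS: "\<exists>x \<xi>. \<xi> \<in> I \<and> S - \<epsilon> < v x \<xi>" if "0 < \<epsilon>" for \<epsilon>
    proof -
      have "S - \<epsilon> < Sup V" using that by (simp add: S_def)
      then obtain y where "y \<in> V" "S - \<epsilon> < y" using less_cSup_iff[OF Vne bddA] by blast
      then show ?thesis by (auto simp: V_def)
    qed
    have aps: "\<exists>x \<xi>. \<xi> \<in> I \<and> v x \<xi> < s0 + \<epsilon>" if "0 < \<epsilon>" for \<epsilon>
    proof -
      have "Inf V < s0 + \<epsilon>" using that by (simp add: s0_def)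
      then obtain y where "y \<in> V" "y < s0 + \<epsilon>" using cInf_less_iff[OF Vne bddB] by blast
      then show ?thesis by (auto simp: V_def)
    qed
    have aS: "\<alpha> * S \<le> M0"
    proof (rule field_le_epsilon)
      fix e :: real assume e: "0 < e"
      define \<epsilon> where "\<epsilon> = e / (\<alpha> + k1)"
      have \<epsilon>: "0 < \<epsilon>" using e \<alpha> k1pos by (simp add: \<epsilon>_def)
      have \<epsilon>e: "(\<alpha> + k1) * \<epsilon> = e" using \<alpha> k1pos by (simp add: \<epsilon>_def)
      obtain x \<xi> where \<xi>: "\<xi> \<in> I" and xv: "S - \<epsilon> < v x \<xi>" using apS[OF \<epsilon>] by blast
      obtain x0 where x0: "\<And>y. v y \<xi> \<le> v x0 \<xi>"
        using attain_max[OF cont[OF \<xi>] per[OF \<xi>]] by blast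
      have eq: "\<alpha> * v x0 \<xi> + H x0 0 \<xi> + Theta k I v x0 \<xi> \<le> 0" by (rule subc[OF \<xi> x0])
      have "0 * (LINT \<zeta>:I|lborel. 0 - v x0 \<zeta>) + k1 * (- \<epsilon>) \<le> (LINT \<zeta>:I|lborel. k \<xi> \<zeta> * (v x0 \<xi> - v x0 \<zeta>))"
      proof (rule intbd[OF \<xi>])
        fix \<zeta> assume \<zeta>: "\<zeta> \<in> I"
        have "- \<epsilon> \<le> v x0 \<xi> - v x0 \<zeta>" using xv x0[of x] leS[OF \<zeta>, of x0] by linarith
        then have "k1 * (- \<epsilon>) \<le> k \<xi> \<zeta> * (v x0 \<xi> - v x0 \<zeta>)"
          using \<epsilon> kb[OF \<xi> \<zeta>] by (intro prod_lb) auto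
        then show "0 * (0 - v x0 \<zeta>) + k1 * (- \<epsilon>) \<le> k \<xi> \<zeta> * (v x0 \<xi> - v x0 \<zeta>)" by simp
      qed
      then have th: "- (k1 * \<epsilon>) \<le> Theta k I v x0 \<xi>" by (simp add: Th)
      have "\<alpha> * (S - \<epsilon>) \<le> \<alpha> * v x0 \<xi>" using xv x0[of x] \<alpha> by (intro mult_left_mono) auto
      then have t1: "\<alpha> * S - \<alpha> * \<epsilon> \<le> \<alpha> * v x0 \<xi>" by (simp add: right_diff_distrib)
      have t2: "\<alpha> * \<epsilon> + k1 * \<epsilon> = e" using \<epsilon>e by (simp add: distrib_right)
      show "\<alpha> * S \<le> M0 + e" using t1 t2 eq th Hb[OF \<xi>, of x0] by linarith
    qed
    have as0: "- M0 \<le> \<alpha> * s0"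
    proof -
      have "- (\<alpha> * s0) \<le> M0"
      proof (rule field_le_epsilon)
        fix e :: real assume e: "0 < e"
        define \<epsilon> where "\<epsilon> = e / (\<alpha> + k1)"
        have \<epsilon>: "0 < \<epsilon>" using e \<alpha> k1pos by (simp add: \<epsilon>_def)
        have \<epsilon>e: "(\<alpha> + k1) * \<epsilon> = e" using \<alpha> k1pos by (simp add: \<epsilon>_def)
        obtain x \<xi> where \<xi>: "\<xi> \<in> I" and xv: "v x \<xi> < s0 + \<epsilon>" using aps[OF \<epsilon>] by blast
        obtain x1 where x1c: "\<forall>i. 0 \<le> x1 $ i \<and> x1 $ i \<le> 1" and x1: "\<And>y. v x1 \<xi> \<le> v y \<xi>"
          using attain_min[OF cont[OF \<xi>] per[OF \<xi>]] by blast
        have eq: "\<alpha> * v x1 \<xi> + H x1 0 \<xi> + Theta k I v x1 \<xi> \<ge> 0" by (rule supc[OF \<xi> x1])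
        have "(LINT \<zeta>:I|lborel. k \<xi> \<zeta> * (v x1 \<xi> - v x1 \<zeta>)) \<le> 0 * (LINT \<zeta>:I|lborel. 0 - v x1 \<zeta>) + k1 * \<epsilon>"
        proof (rule intbd2[OF \<xi>])
          fix \<zeta> assume \<zeta>: "\<zeta> \<in> I"
          have "v x1 \<xi> - v x1 \<zeta> \<le> \<epsilon>" using xv x1[of x] ges[OF \<zeta>, of x1] by linarith
          then have "k \<xi> \<zeta> * (v x1 \<xi> - v x1 \<zeta>) \<le> k1 * \<epsilon>"
            using \<epsilon> kb[OF \<xi> \<zeta>] by (intro prod_ub) auto
          then show "k \<xi> \<zeta> * (v x1 \<xi> - v x1 \<zeta>) \<le> 0 * (0 - v x1 \<zeta>) + k1 * \<epsilon>" by simp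
        qed
        then have th: "Theta k I v x1 \<xi> \<le> k1 * \<epsilon>" by (simp add: Th)
        have "\<alpha> * v x1 \<xi> \<le> \<alpha> * (s0 + \<epsilon>)" using xv x1[of x] \<alpha> by (intro mult_left_mono) auto
        then have t1: "\<alpha> * v x1 \<xi> \<le> \<alpha> * s0 + \<alpha> * \<epsilon>" by (simp add: distrib_left)
        have t2: "\<alpha> * \<epsilon> + k1 * \<epsilon> = e" using \<epsilon>e by (simp add: distrib_right)
        show "- (\<alpha> * s0) \<le> M0 + e" using t1 t2 eq th Hb[OF \<xi>, of x1] by linarith
      qed
      then show ?thesis by linarith
    qed
    have av: "- M0 \<le> \<alpha> * v x \<xi> \<and> \<alpha> * v x \<xi> \<le> M0" if "\<xi> \<in> I" for x \<xi>
    proof -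
      have "\<alpha> * v x \<xi> \<le> \<alpha> * S" using leS[OF that] \<alpha> by (intro mult_left_mono) auto
      moreover have "\<alpha> * s0 \<le> \<alpha> * v x \<xi>" using ges[OF that] \<alpha> by (intro mult_left_mono) auto
      ultimately show ?thesis using aS as0 by linarith
    qed
    define T where "T = S - s0"
    have T0: "0 \<le> T" using leS[OF \<xi>0, of 0] ges[OF \<xi>0, of 0] by (simp add: T_def)
    have thb: "- (k1 * T) \<le> Theta k I v x \<xi> \<and> Theta k I v x \<xi> \<le> k1 * T" if \<xi>: "\<xi> \<in> I" for x \<xi>
    proof
      have "0 * (LINT \<zeta>:I|lborel. 0 - v x \<zeta>) + k1 * (- T) \<le> (LINT \<zeta>:I|lborel. k \<xi> \<zeta> * (v x \<xi> - v x \<zeta>))"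
      proof (rule intbd[OF \<xi>])
        fix \<zeta> assume \<zeta>: "\<zeta> \<in> I"
        have "- T \<le> v x \<xi> - v x \<zeta>" using ges[OF \<xi>, of x] leS[OF \<zeta>, of x] by (simp add: T_def)
        then have "k1 * (- T) \<le> k \<xi> \<zeta> * (v x \<xi> - v x \<zeta>)"
          using T0 kb[OF \<xi> \<zeta>] by (intro prod_lb) auto
        then show "0 * (0 - v x \<zeta>) + k1 * (- T) \<le> k \<xi> \<zeta> * (v x \<xi> - v x \<zeta>)" by simp
      qed
      then show "- (k1 * T) \<le> Theta k I v x \<xi>" by (simp add: Th)
      have "(LINT \<zeta>:I|lborel. k \<xi> \<zeta> * (v x \<xi> - v x \<zeta>)) \<le> 0 * (LINT \<zeta>:I|lborel. 0 - v x \<zeta>) + k1 * T"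
      proof (rule intbd2[OF \<xi>])
        fix \<zeta> assume \<zeta>: "\<zeta> \<in> I"
        have "v x \<xi> - v x \<zeta> \<le> T" using leS[OF \<xi>, of x] ges[OF \<zeta>, of x] by (simp add: T_def)
        then have "k \<xi> \<zeta> * (v x \<xi> - v x \<zeta>) \<le> k1 * T"
          using T0 kb[OF \<xi> \<zeta>] by (intro prod_ub) auto
        then show "k \<xi> \<zeta> * (v x \<xi> - v x \<zeta>) \<le> 0 * (0 - v x \<zeta>) + k1 * T" by simp
      qed
      then show "Theta k I v x \<xi> \<le> k1 * T" by (simp add: Th)
    qed
    define Y where "Y = (M0 + k1 * T + C2) / C1"
    define R where "R = Y powr (1 / m)"
    have "0 \<le> k1 * T" using k1pos T0 by simp
    then have "0 < M0 + k1 * T + C2" using M0pos B1(2) by linarith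
    then have Ypos: "0 < Y" using B1(1) by (simp add: Y_def)
    have R0: "0 \<le> R" by (simp add: R_def)
    have lip: "(R + 1)-lipschitz_on UNIV (\<lambda>x. v x \<eta>)" if \<eta>: "\<eta> \<in> I" for \<eta>
    proof (rule lip_from_sub[OF cont[OF \<eta>], where B = Bv])
      show "\<bar>v x \<eta>\<bar> \<le> Bv" for x using Bv[OF \<eta>] by blast
      show "0 \<le> R" by (rule R0)
      fix \<phi> D\<phi> x0 assume tC: "C1_test \<phi> D\<phi>" and mx: "\<And>y. v y \<eta> - \<phi> y \<le> v x0 \<eta> - \<phi> x0"
      have e: "\<alpha> * v x0 \<eta> + H x0 (D\<phi> x0) \<eta> + Theta k I v x0 \<eta> \<le> 0" by (rule subs[OF \<eta> tC mx])
      have "C1 * norm (D\<phi> x0) powr m - C2 \<le> H x0 (D\<phi> x0) \<eta>" by (rule B1(4)[OF \<eta>])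
      then have "C1 * norm (D\<phi> x0) powr m \<le> M0 + k1 * T + C2"
        using e av[OF \<eta>, of x0] thb[OF \<eta>, of x0] by linarith
      then have "norm (D\<phi> x0) powr m * C1 \<le> M0 + k1 * T + C2" by (simp add: mult.commute)
      then have np: "norm (D\<phi> x0) powr m \<le> Y" using B1(1) by (simp add: Y_def pos_le_divide_eq)
      have "norm (D\<phi> x0) = (norm (D\<phi> x0) powr m) powr (1 / m)"
        using B1(3) by (simp add: powr_powr)
      also have "\<dots> \<le> Y powr (1 / m)" using np B1(3) by (intro powr_mono2) auto
      finally show "norm (D\<phi> x0) \<le> R" by (simp add: R_def)
    qed
    obtain xs \<xi>s where \<xi>s: "\<xi>s \<in> I" and xs: "S - 1 < v xs \<xi>s" using apS[of 1] by auto
    obtain x0 where x0c: "\<forall>i. 0 \<le> x0 $ i \<and> x0 $ i \<le> 1" and x0: "\<And>y. v y \<xi>s \<le> v x0 \<xi>s"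
      using attain_max[OF cont[OF \<xi>s] per[OF \<xi>s]] by blast
    have e0: "\<alpha> * v x0 \<xi>s + H x0 0 \<xi>s + Theta k I v x0 \<xi>s \<le> 0" by (rule subc[OF \<xi>s x0])
    have "k0 * (LINT \<zeta>:I|lborel. S - v x0 \<zeta>) + (- k1) \<le> (LINT \<zeta>:I|lborel. k \<xi>s \<zeta> * (v x0 \<xi>s - v x0 \<zeta>))"
    proof (rule intbd[OF \<xi>s])
      fix \<zeta> assume \<zeta>: "\<zeta> \<in> I"
      show "k0 * (S - v x0 \<zeta>) + - k1 \<le> k \<xi>s \<zeta> * (v x0 \<xi>s - v x0 \<zeta>)"
      proof (rule ar1)
        show "k0 \<le> k \<xi>s \<zeta>" "k \<xi>s \<zeta> \<le> k1" using kb[OF \<xi>s \<zeta>] by auto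
        show "0 \<le> k0" using k0_pos by simp
        show "0 \<le> S - v x0 \<zeta>" using leS[OF \<zeta>, of x0] by simp
        show "0 \<le> S - v x0 \<xi>s" using leS[OF \<xi>s, of x0] by simp
        show "S - v x0 \<xi>s \<le> 1" using xs x0[of xs] by simp
        show "v x0 \<xi>s - v x0 \<zeta> = (S - v x0 \<zeta>) - (S - v x0 \<xi>s)" by simp
      qed
    qed
    then have th0: "k0 * (LINT \<zeta>:I|lborel. S - v x0 \<zeta>) - k1 \<le> Theta k I v x0 \<xi>s" by (simp add: Th)
    have "k0 * (LINT \<zeta>:I|lborel. S - v x0 \<zeta>) \<le> 2 * M0 + k1"
      using th0 e0 av[OF \<xi>s, of x0] Hb[OF \<xi>s, of x0] by linarith
    then have "(LINT \<zeta>:I|lborel. S - v x0 \<zeta>) * k0 \<le> 2 * M0 + k1" by (simp add: mult.commute)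
    then have intS: "(LINT \<zeta>:I|lborel. S - v x0 \<zeta>) \<le> B0" using k0_pos by (simp add: B0_def pos_le_divide_eq)
    have wb: "S - v x \<eta> \<le> A0 + A1 * (R + 1)" if \<eta>: "\<eta> \<in> I" for x \<eta>
    proof -
      obtain x1 where x1c: "\<forall>i. 0 \<le> x1 $ i \<and> x1 $ i \<le> 1" and x1: "\<And>y. v x1 \<eta> \<le> v y \<eta>"
        using attain_min[OF cont[OF \<eta>] per[OF \<eta>]] by blast
      have e1: "\<alpha> * v x1 \<eta> + H x1 0 \<eta> + Theta k I v x1 \<eta> \<ge> 0" by (rule supc[OF \<eta> x1])
      have dst: "norm (x1 - x0) \<le> D" unfolding D_def by (rule cube_dist[OF x1c x0c])
      have lipz: "v x0 \<zeta> - (R + 1) * D \<le> v x1 \<zeta>" if \<zeta>: "\<zeta> \<in> I" for \<zeta>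
      proof -
        have "dist (v x1 \<zeta>) (v x0 \<zeta>) \<le> (R + 1) * dist x1 x0"
          using lipschitz_onD[OF lip[OF \<zeta>]] by simp
        also have "\<dots> \<le> (R + 1) * D" using dst R0 by (intro mult_left_mono) (auto simp: dist_norm)
        finally show ?thesis unfolding dist_real_def by arith
      qed
      define w where "w = S - v x1 \<eta>"
      have w0: "0 \<le> w" using leS[OF \<eta>, of x1] by (simp add: w_def)
      have RD0: "0 \<le> (R + 1) * D" using R0 D0 by simp
      have "(LINT \<zeta>:I|lborel. k \<eta> \<zeta> * (v x1 \<eta> - v x1 \<zeta>)) \<le> k1 * (LINT \<zeta>:I|lborel. S - v x0 \<zeta>) + (k1 * ((R + 1) * D) - k0 * w)"
      proof (rule intbd2[OF \<eta>])
        fix \<zeta> assume \<zeta>: "\<zeta> \<in> I"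
        have h0: "0 \<le> (S - v x0 \<zeta>) + (R + 1) * D" using leS[OF \<zeta>, of x0] RD0 by linarith
        have dh: "v x1 \<eta> - v x1 \<zeta> \<le> ((S - v x0 \<zeta>) + (R + 1) * D) - w"
          using lipz[OF \<zeta>] by (simp add: w_def)
        have "k \<eta> \<zeta> * (v x1 \<eta> - v x1 \<zeta>) \<le> k1 * ((S - v x0 \<zeta>) + (R + 1) * D) - k0 * w"
          using kb[OF \<eta> \<zeta>] k0_pos w0 dh h0 by (intro ar2) auto
        moreover have "k1 * ((S - v x0 \<zeta>) + (R + 1) * D) = k1 * (S - v x0 \<zeta>) + k1 * ((R + 1) * D)"
          by (rule distrib_left)
        ultimately show "k \<eta> \<zeta> * (v x1 \<eta> - v x1 \<zeta>) \<le> k1 * (S - v x0 \<zeta>) + (k1 * ((R + 1) * D) - k0 * w)"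
          by linarith
      qed
      then have th1: "Theta k I v x1 \<eta> \<le> k1 * (LINT \<zeta>:I|lborel. S - v x0 \<zeta>) + (k1 * ((R + 1) * D) - k0 * w)"
        by (simp add: Th)
      have "k1 * (LINT \<zeta>:I|lborel. S - v x0 \<zeta>) \<le> k1 * B0" using intS k1pos by (intro mult_left_mono) auto
      then have "k0 * w \<le> 2 * M0 + k1 * B0 + k1 * ((R + 1) * D)"
        using th1 e1 av[OF \<eta>, of x1] Hb[OF \<eta>, of x1] by linarith
      then have "w * k0 \<le> 2 * M0 + k1 * B0 + k1 * ((R + 1) * D)" by (simp add: mult.commute)
      then have "w \<le> (2 * M0 + k1 * B0 + k1 * ((R + 1) * D)) / k0" using k0_pos by (simp add: pos_le_divide_eq)
      also have "\<dots> = A0 + A1 * (R + 1)" using k0_pos by (simp add: A0_def A1_def field_simps)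
      finally have "w \<le> A0 + A1 * (R + 1)" .
      moreover have "S - v x \<eta> \<le> w" using x1[of x] by (simp add: w_def)
      ultimately show ?thesis by linarith
    qed
    have Tb: "T \<le> A0 + A1 * (R + 1)"
    proof -
      have "S - (A0 + A1 * (R + 1)) \<le> s0" unfolding s0_def
      proof (rule cInf_greatest[OF Vne])
        fix y assume "y \<in> V"
        then obtain x \<eta> where "\<eta> \<in> I" "y = v x \<eta>" by (auto simp: V_def)
        then show "S - (A0 + A1 * (R + 1)) \<le> y" using wb[of \<eta> x] by linarith
      qed
      then show ?thesis by (simp add: T_def)
    qed
    have "k1 * T \<le> k1 * (A0 + A1 * (R + 1))" using Tb k1pos by (intro mult_left_mono) auto
    then have "M0 + k1 * T + C2 \<le> M0 + C2 + k1 * (A0 + A1 * (R + 1))" by linarith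
    then have "Y \<le> (M0 + C2 + k1 * (A0 + A1 * (R + 1))) / C1"
      using B1(1) unfolding Y_def by (intro divide_right_mono) auto
    also have "\<dots> = Ya + Yb * R" using B1(1) by (simp add: Ya_def Yb_def field_simps)
    finally have "Y \<le> Ya + Yb * Y powr (1 / m)" by (simp add: R_def)
    then have YY: "Y \<le> Ymax" unfolding Ymax_def
      by (rule sublin_bound[OF B1(3) Ya0 Yb0 less_imp_le[OF Ypos]])
    have RR: "R \<le> Rmax" unfolding R_def Rmax_def using YY Ypos B1(3) by (intro powr_mono2) auto
    have "A1 * (R + 1) \<le> A1 * (Rmax + 1)" using RR A10 by (intro mult_left_mono) auto
    then have TT: "T \<le> Tmax" unfolding Tmax_def using Tb by linarith
    have kT: "k1 * T \<le> k1 * Tmax" using TT k1pos by (intro mult_left_mono) auto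
    show ?thesis
    proof (intro ballI conjI allI)
      fix \<xi> assume \<xi>: "\<xi> \<in> I"
      have "R + 1 \<le> C" unfolding C_def using RR Cge1 by linarith
      then show "C-lipschitz_on UNIV (\<lambda>x. v x \<xi>)" by (rule lipschitz_on_le[OF lip[OF \<xi>]])
      fix x
      have "\<bar>Theta k I v x \<xi>\<bar> \<le> k1 * T" using thb[OF \<xi>, of x] by arith
      then show "\<bar>Theta k I v x \<xi>\<bar> \<le> C" unfolding C_def using kT Cge2 by linarith
    qed
  qed
  show ?thesis
  proof (intro exI[of _ C] conjI allI impI)
    show "0 < C" by (rule Cpos)
    fix \<alpha> :: real and v assume "0 < \<alpha>" "DP_solution I k H \<alpha> v"
    then have "\<forall>\<xi>\<in>I. C-lipschitz_on UNIV (\<lambda>x. v x \<xi>) \<and> (\<forall>x. \<bar>Theta k I v x \<xi>\<bar> \<le> C)" by (rule main)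
    then show "AE \<xi> in lborel. \<xi> \<in> I \<longrightarrow> C-lipschitz_on UNIV (\<lambda>x. v x \<xi>) \<and> (\<forall>x. \<bar>Theta k I v x \<xi>\<bar> \<le> C)"
      by (intro AE_I2) blast
  qed
qed

end
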